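(* Let $\mathcal{C}$ be a super-modular tensor category and let $\check{\mathcal{C}}$ be any minimal modular extension of $\mathcal{C}$. Then any character $\chi(a)$ of the fusion algebra of $\mathcal{C}$ is of the form \begin{equation} \chi(a) = d_a M_{a,x} \end{equation} for some $x \in \check{\mathcal{C}}$, which is unique up to fusion with $\psi$.
   Context: A super-modular tensor category $\mathcal{C}$ is a unitary braided fusion category whose only nontrivial transparent (invisible) particle is a fermion $\psi$ with $\theta_\psi=-1$ and $\psi\times\psi=1$. A minimal modular extension $\check{\mathcal{C}}$ is a unitary modular tensor category containing $\mathcal{C}$ as a subcategory with total quantum dimension $\mathcal{D}^2_{\check{\mathcal{C}}}=2\mathcal{D}^2_{\mathcal{C}}$. A function $\chi$ on anyon labels is a character of the fusion algebra of $\mathcal{C}$ if $\chi(a)\chi(b)=\sum_{c\in\mathcal{C}}N_{ab}^c\chi(c)$ for all $a,b\in\mathcal{C}$. Here $d_a$ is the quantum dimension and $M_{ab}=S^*_{ab}S_{11}/(S_{1a}S_{1b})$ is the scalar monodromy computed in $\check{\mathcal{C}}$. *)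

theory Defs
  imports Complex_Main
begin

(* A unitary modular tensor category, described skeletally through its
   (unitary) modular data: label set L of simple objects, unit one, duality,
   fusion multiplicities N a b c = N_{ab}^c, quantum dimensions d, twists theta,
   and S-matrix. *)

definition total_dim :: "'a set \<Rightarrow> ('a \<Rightarrow> real) \<Rightarrow> real" where
  "total_dim L d = sqrt (\<Sum>a\<in>L. (d a)^2)"

definition umtc ::
  "'a set \<Rightarrow> 'a \<Rightarrow> ('a \<Rightarrow> 'a) \<Rightarrow> ('a \<Rightarrow> 'a \<Rightarrow> 'a \<Rightarrow> nat) \<Rightarrow>
   ('a \<Rightarrow> real) \<Rightarrow> ('a \<Rightarrow> complex) \<Rightarrow> ('a \<Rightarrow> 'a \<Rightarrow> complex) \<Rightarrow> bool" where
  "umtc L one dual N d \<theta> S \<longleftrightarrow>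
     finite L \<and> one \<in> L \<and> dual one = one \<and>
     (\<forall>a\<in>L. dual a \<in> L \<and> dual (dual a) = a) \<and>
     (\<forall>a b c. N a b c \<noteq> 0 \<longrightarrow> a \<in> L \<and> b \<in> L \<and> c \<in> L) \<and>
     (\<forall>a\<in>L. \<forall>b\<in>L. N one a b = (if a = b then 1 else 0)) \<and>
     (\<forall>a b c. N a b c = N b a c) \<and>
     (\<forall>a\<in>L. \<forall>b\<in>L. \<forall>c\<in>L. N a b c = N (dual a) c b) \<and>
     (\<forall>a\<in>L. \<forall>b\<in>L. N a b one = (if b = dual a then 1 else 0)) \<and>
     (\<forall>a\<in>L. \<forall>b\<in>L. \<forall>c\<in>L. \<forall>f\<in>L.
        (\<Sum>e\<in>L. N a b e * N e c f) = (\<Sum>e\<in>L. N b c e * N a e f)) \<and>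
     (\<forall>a\<in>L. d a > 0 \<and> d (dual a) = d a) \<and>
     (\<forall>a\<in>L. \<forall>b\<in>L. d a * d b = (\<Sum>c\<in>L. real (N a b c) * d c)) \<and>
     (\<forall>a\<in>L. cmod (\<theta> a) = 1 \<and> \<theta> (dual a) = \<theta> a) \<and> \<theta> one = 1 \<and>
     (\<forall>a\<in>L. \<forall>b\<in>L. S a b = (1 / complex_of_real (total_dim L d)) *
        (\<Sum>c\<in>L. of_nat (N (dual a) b c) * (\<theta> c / (\<theta> a * \<theta> b)) * complex_of_real (d c))) \<and>
     (\<forall>a\<in>L. \<forall>b\<in>L. (\<Sum>c\<in>L. S a c * cnj (S b c)) = (if a = b then 1 else 0)) \<and>
     (\<forall>a\<in>L. \<forall>b\<in>L. \<forall>x\<in>L.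
        S a x * S b x = S one x * (\<Sum>c\<in>L. of_nat (N a b c) * S c x))"

definition monodromy :: "'a \<Rightarrow> ('a \<Rightarrow> 'a \<Rightarrow> complex) \<Rightarrow> 'a \<Rightarrow> 'a \<Rightarrow> complex" where
  "monodromy one S a b = cnj (S a b) * S one one / (S one a * S one b)"

definition fusion_subcat :: "'a set \<Rightarrow> 'a \<Rightarrow> ('a \<Rightarrow> 'a) \<Rightarrow> ('a \<Rightarrow> 'a \<Rightarrow> 'a \<Rightarrow> nat) \<Rightarrow> 'a set \<Rightarrow> bool" where
  "fusion_subcat L one dual N C \<longleftrightarrow>
     C \<subseteq> L \<and> one \<in> C \<and> (\<forall>a\<in>C. dual a \<in> C) \<and>
     (\<forall>a\<in>C. \<forall>b\<in>C. \<forall>c. N a b c \<noteq> 0 \<longrightarrow> c \<in> C)"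

(* C (with the braiding inherited from the ambient UMTC) is super-modular with fermion psi:
   its only transparent simple objects are one and psi, theta_psi = -1, psi x psi = 1 *)
definition super_modular_sub ::
  "'a set \<Rightarrow> 'a \<Rightarrow> ('a \<Rightarrow> 'a) \<Rightarrow> ('a \<Rightarrow> 'a \<Rightarrow> 'a \<Rightarrow> nat) \<Rightarrow>
   ('a \<Rightarrow> complex) \<Rightarrow> ('a \<Rightarrow> 'a \<Rightarrow> complex) \<Rightarrow> 'a set \<Rightarrow> 'a \<Rightarrow> bool" where
  "super_modular_sub L one dual N \<theta> S C \<psi> \<longleftrightarrow>
     fusion_subcat L one dual N C \<and> \<psi> \<in> C \<and> \<psi> \<noteq> one \<and> \<theta> \<psi> = -1 \<and>
     (\<forall>c. N \<psi> \<psi> c = (if c = one then 1 else 0)) \<and>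
     {a\<in>C. \<forall>b\<in>C. monodromy one S a b = 1} = {one, \<psi>}"

definition minimal_extension :: "'a set \<Rightarrow> ('a \<Rightarrow> real) \<Rightarrow> 'a set \<Rightarrow> bool" where
  "minimal_extension L d C \<longleftrightarrow> (\<Sum>a\<in>L. (d a)^2) = 2 * (\<Sum>a\<in>C. (d a)^2)"

definition fusion_character ::
  "'a set \<Rightarrow> ('a \<Rightarrow> 'a \<Rightarrow> 'a \<Rightarrow> nat) \<Rightarrow> ('a \<Rightarrow> complex) \<Rightarrow> bool" where
  "fusion_character C N \<chi> \<longleftrightarrow>
     (\<exists>a\<in>C. \<chi> a \<noteq> 0) \<and>
     (\<forall>a\<in>C. \<forall>b\<in>C. \<chi> a * \<chi> b = (\<Sum>c\<in>C. of_nat (N a b c) * \<chi> c))"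

end

theory Submission imports Defs begin

locale mtc =
  fixes L :: "'a set" and one :: 'a and dual :: "'a \<Rightarrow> 'a"
    and N :: "'a \<Rightarrow> 'a \<Rightarrow> 'a \<Rightarrow> nat" and d :: "'a \<Rightarrow> real"
    and \<theta> :: "'a \<Rightarrow> complex" and S :: "'a \<Rightarrow> 'a \<Rightarrow> complex"
  assumes fin: "finite L" and one_L: "one \<in> L" and dual_one: "dual one = one"
   and A_dual: "\<forall>a\<in>L. dual a \<in> L \<and> dual (dual a) = a"
   and A_NL: "\<forall>a b c. N a b c \<noteq> 0 \<longrightarrow> a \<in> L \<and> b \<in> L \<and> c \<in> L"
   and A_None: "\<forall>a\<in>L. \<forall>b\<in>L. N one a b = (if a = b then 1 else 0)"
   and A_comm: "\<forall>a b c. N a b c = N b a c"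
   and A_R: "\<forall>a\<in>L. \<forall>b\<in>L. \<forall>c\<in>L. N a b c = N (dual a) c b"
   and A_unit: "\<forall>a\<in>L. \<forall>b\<in>L. N a b one = (if b = dual a then 1 else 0)"
   and A_assoc: "\<forall>a\<in>L. \<forall>b\<in>L. \<forall>c\<in>L. \<forall>f\<in>L.
        (\<Sum>e\<in>L. N a b e * N e c f) = (\<Sum>e\<in>L. N b c e * N a e f)"
   and A_d: "\<forall>a\<in>L. d a > 0 \<and> d (dual a) = d a"
   and A_dm: "\<forall>a\<in>L. \<forall>b\<in>L. d a * d b = (\<Sum>c\<in>L. real (N a b c) * d c)"
   and A_th: "\<forall>a\<in>L. cmod (\<theta> a) = 1 \<and> \<theta> (dual a) = \<theta> a"
   and theta_one: "\<theta> one = 1"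
   and A_S: "\<forall>a\<in>L. \<forall>b\<in>L. S a b = (1 / complex_of_real (total_dim L d)) *
        (\<Sum>c\<in>L. of_nat (N (dual a) b c) * (\<theta> c / (\<theta> a * \<theta> b)) * complex_of_real (d c))"
   and A_unitary: "\<forall>a\<in>L. \<forall>b\<in>L. (\<Sum>c\<in>L. S a c * cnj (S b c)) = (if a = b then 1 else 0)"
   and A_ver: "\<forall>a\<in>L. \<forall>b\<in>L. \<forall>x\<in>L.
        S a x * S b x = S one x * (\<Sum>c\<in>L. of_nat (N a b c) * S c x)"
begin

lemma mtc_iff: "mtc L one dual N d \<theta> S = umtc L one dual N d \<theta> S"
  unfolding mtc_def umtc_def by (simp only: conj_assoc)

definition "D = total_dim L d"

lemma dual_L: "a \<in> L \<Longrightarrow> dual a \<in> L" using A_dual by blast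
lemma dual_dual: "a \<in> L \<Longrightarrow> dual (dual a) = a" using A_dual by blast
lemma N_L: "N a b c \<noteq> 0 \<Longrightarrow> a \<in> L \<and> b \<in> L \<and> c \<in> L" using A_NL by blast
lemma N_one: "a \<in> L \<Longrightarrow> b \<in> L \<Longrightarrow> N one a b = (if a = b then 1 else 0)" using A_None by blast
lemma N_comm: "N a b c = N b a c" using A_comm by blast
lemma N_R: "a \<in> L \<Longrightarrow> b \<in> L \<Longrightarrow> c \<in> L \<Longrightarrow> N a b c = N (dual a) c b" using A_R by blast
lemma N_unit: "a \<in> L \<Longrightarrow> b \<in> L \<Longrightarrow> N a b one = (if b = dual a then 1 else 0)" using A_unit by blast
lemma N_assoc: "a \<in> L \<Longrightarrow> b \<in> L \<Longrightarrow> c \<in> L \<Longrightarrow> f \<in> L \<Longrightarrow>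
        (\<Sum>e\<in>L. N a b e * N e c f) = (\<Sum>e\<in>L. N b c e * N a e f)" using A_assoc by blast
lemma d_pos: "a \<in> L \<Longrightarrow> d a > 0" using A_d by blast
lemma d_dual: "a \<in> L \<Longrightarrow> d (dual a) = d a" using A_d by blast
lemma d_mult: "a \<in> L \<Longrightarrow> b \<in> L \<Longrightarrow> d a * d b = (\<Sum>c\<in>L. real (N a b c) * d c)" using A_dm by blast
lemma theta_norm: "a \<in> L \<Longrightarrow> cmod (\<theta> a) = 1" using A_th by blast
lemma theta_dual: "a \<in> L \<Longrightarrow> \<theta> (dual a) = \<theta> a" using A_th by blast
lemma S_def: "a \<in> L \<Longrightarrow> b \<in> L \<Longrightarrow> S a b = (1 / complex_of_real D) *
        (\<Sum>c\<in>L. of_nat (N (dual a) b c) * (\<theta> c / (\<theta> a * \<theta> b)) * complex_of_real (d c))"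
  using A_S unfolding D_def by blast
lemma unitary: "a \<in> L \<Longrightarrow> b \<in> L \<Longrightarrow> (\<Sum>c\<in>L. S a c * cnj (S b c)) = (if a = b then 1 else 0)"
  using A_unitary by blast
lemma verlinde: "a \<in> L \<Longrightarrow> b \<in> L \<Longrightarrow> x \<in> L \<Longrightarrow>
        S a x * S b x = S one x * (\<Sum>c\<in>L. of_nat (N a b c) * S c x)"
  using A_ver by blast

lemma theta_nz: "a \<in> L \<Longrightarrow> \<theta> a \<noteq> 0"
  using theta_norm by fastforce

lemma D_pos: "D > 0"
proof -
  have "(\<Sum>a\<in>L. (d a)^2) > 0"
    using fin one_L d_pos by (intro sum_pos) (auto, metis less_irrefl)
  then show ?thesis by (simp add: D_def total_dim_def)
qed

lemma D_sq: "D^2 = (\<Sum>a\<in>L. (d a)^2)"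
  unfolding D_def total_dim_def by (simp add: sum_nonneg)

lemma d_one: "d one = 1"
proof -
  have "d one * d one = (\<Sum>c\<in>L. real (N one one c) * d c)" using d_mult one_L by simp
  also have "\<dots> = (\<Sum>c\<in>L. if c = one then d c else 0)"
    by (rule sum.cong) (auto simp: N_one one_L)
  also have "\<dots> = d one" using fin one_L by simp
  finally show ?thesis using d_pos[OF one_L] by simp
qed

lemma S_one_left: assumes "a \<in> L" shows "S one a = complex_of_real (d a / D)"
proof -
  have "S one a = (1 / complex_of_real D) *
        (\<Sum>c\<in>L. of_nat (N (dual one) a c) * (\<theta> c / (\<theta> one * \<theta> a)) * complex_of_real (d c))"
    using S_def one_L assms by simp
  also have "(\<Sum>c\<in>L. of_nat (N (dual one) a c) * (\<theta> c / (\<theta> one * \<theta> a)) * complex_of_real (d c))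
      = (\<Sum>c\<in>L. if c = a then complex_of_real (d a) else 0)"
    by (rule sum.cong) (auto simp: dual_one N_one assms theta_one theta_nz)
  also have "\<dots> = complex_of_real (d a)" using fin assms by simp
  finally show ?thesis by simp
qed

lemma S_one_right: assumes "a \<in> L" shows "S a one = complex_of_real (d a / D)"
proof -
  have "S a one = (1 / complex_of_real D) *
        (\<Sum>c\<in>L. of_nat (N (dual a) one c) * (\<theta> c / (\<theta> a * \<theta> one)) * complex_of_real (d c))"
    using S_def one_L assms by simp
  also have "(\<Sum>c\<in>L. of_nat (N (dual a) one c) * (\<theta> c / (\<theta> a * \<theta> one)) * complex_of_real (d c))
      = (\<Sum>c\<in>L. if c = dual a then complex_of_real (d a) else 0)"
    by (rule sum.cong) (auto simp: N_comm[of "dual a" one] dual_L N_one assms theta_one theta_nz theta_dual d_dual)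
  also have "\<dots> = complex_of_real (d a)" using fin assms dual_L by simp
  finally show ?thesis by simp
qed

lemma S_one_nz: "a \<in> L \<Longrightarrow> S one a \<noteq> 0"
  using S_one_left d_pos D_pos by (simp add: S_one_left) (metis less_irrefl)

lemma cnj_S_one: "a \<in> L \<Longrightarrow> cnj (S one a) = S one a"
  by (simp add: S_one_left)

lemma N_sym3: "a \<in> L \<Longrightarrow> b \<in> L \<Longrightarrow> c \<in> L \<Longrightarrow> N (dual a) b c = N (dual b) a (dual c)"
proof -
  assume a: "a \<in> L" and b: "b \<in> L" and c: "c \<in> L"
  have "N (dual a) b c = N a c b" using N_R[of "dual a" b c] a b c dual_L dual_dual by simp
  also have "\<dots> = N c a b" by (rule N_comm)
  also have "\<dots> = N (dual c) b a" using N_R a b c by simp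
  also have "\<dots> = N b (dual c) a" by (rule N_comm)
  also have "\<dots> = N (dual b) a (dual c)" using N_R b c a dual_L by simp
  finally show ?thesis .
qed

lemma S_sym: assumes a: "a \<in> L" and b: "b \<in> L" shows "S a b = S b a"
proof -
  let ?f = "\<lambda>c. (\<theta> c / (\<theta> a * \<theta> b)) * complex_of_real (d c)"
  have "(\<Sum>c\<in>L. of_nat (N (dual b) a c) * (\<theta> c / (\<theta> b * \<theta> a)) * complex_of_real (d c))
      = (\<Sum>c\<in>L. of_nat (N (dual b) a (dual c)) * (\<theta> (dual c) / (\<theta> b * \<theta> a)) * complex_of_real (d (dual c)))"
    by (rule sum.reindex_bij_witness[of _ dual dual]) (auto simp: dual_dual dual_L)
  also have "\<dots> = (\<Sum>c\<in>L. of_nat (N (dual a) b c) * (\<theta> c / (\<theta> a * \<theta> b)) * complex_of_real (d c))"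
    by (rule sum.cong) (auto simp: N_sym3[OF a b] theta_dual d_dual mult.commute)
  finally show ?thesis using S_def a b by simp
qed

end

lemma delta_sum1: "finite A \<Longrightarrow> k \<in> A \<Longrightarrow> (\<Sum>a\<in>A. (if a = k then 1 else 0) * f a) = (f k :: complex)"
proof -
  assume "finite A" "k \<in> A"
  have "(\<Sum>a\<in>A. (if a = k then 1 else 0) * f a) = (\<Sum>a\<in>A. if a = k then f a else 0)"
    by (rule sum.cong) auto
  then show ?thesis using \<open>finite A\<close> \<open>k \<in> A\<close> by simp
qed

lemma delta_sum2: "finite A \<Longrightarrow> k \<in> A \<Longrightarrow> (\<Sum>a\<in>A. f a * (if k = a then 1 else 0)) = (f k :: complex)"
proof -
  assume "finite A" "k \<in> A"
  have "(\<Sum>a\<in>A. f a * (if k = a then 1 else 0)) = (\<Sum>a\<in>A. if a = k then f a else 0)"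
    by (rule sum.cong) auto
  then show ?thesis using \<open>finite A\<close> \<open>k \<in> A\<close> by simp
qed

context mtc begin

lemma surj:
  assumes CL: "C \<subseteq> L" and oneC: "one \<in> C"
    and clos: "\<forall>a\<in>C. \<forall>b\<in>C. \<forall>c. N a b c \<noteq> 0 \<longrightarrow> c \<in> C"
    and chi: "fusion_character C N \<chi>"
  shows "\<exists>x\<in>L. \<forall>a\<in>C. \<chi> a = cnj (S a x) / S one x"
proof (rule ccontr)
  assume nex: "\<not> ?thesis"
  define g where "g x a = cnj (S a x) / S one x" for x a
  define ev where "ev h u = (\<Sum>a\<in>C. u a * h a)" for h :: "'a \<Rightarrow> complex" and u
  define mult where "mult u v = (\<lambda>c. \<Sum>a\<in>C. \<Sum>b\<in>C. u a * v b * of_nat (N a b c))"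
    for u v :: "'a \<Rightarrow> complex"
  have finC: "finite C" using CL fin finite_subset by blast
  have hom: "ev h (mult u v) = ev h u * ev h v"
    if hm: "\<forall>a\<in>C. \<forall>b\<in>C. h a * h b = (\<Sum>c\<in>C. of_nat (N a b c) * h c)" for h u v
  proof -
    have "ev h (mult u v) = (\<Sum>c\<in>C. \<Sum>a\<in>C. \<Sum>b\<in>C. u a * v b * (of_nat (N a b c) * h c))"
      by (simp add: ev_def mult_def sum_distrib_right mult.assoc)
    also have "\<dots> = (\<Sum>a\<in>C. \<Sum>c\<in>C. \<Sum>b\<in>C. u a * v b * (of_nat (N a b c) * h c))"
      by (rule sum.swap)
    also have "\<dots> = (\<Sum>a\<in>C. \<Sum>b\<in>C. \<Sum>c\<in>C. u a * v b * (of_nat (N a b c) * h c))"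
      by (rule sum.cong[OF refl], rule sum.swap)
    also have "\<dots> = (\<Sum>a\<in>C. \<Sum>b\<in>C. u a * v b * (h a * h b))"
      by (rule sum.cong[OF refl], rule sum.cong[OF refl]) (simp add: sum_distrib_left[symmetric] hm)
    also have "\<dots> = ev h u * ev h v"
      by (simp add: ev_def sum_product mult_ac)
    finally show ?thesis .
  qed
  have chim: "\<forall>a\<in>C. \<forall>b\<in>C. \<chi> a * \<chi> b = (\<Sum>c\<in>C. of_nat (N a b c) * \<chi> c)"
    using chi unfolding fusion_character_def by blast
  have chi1: "\<chi> one = 1"
  proof -
    obtain b where b: "b \<in> C" "\<chi> b \<noteq> 0" using chi unfolding fusion_character_def by blast
    have bL: "b \<in> L" using b(1) CL by blast
    have "\<chi> one * \<chi> b = (\<Sum>c\<in>C. of_nat (N one b c) * \<chi> c)" using chim oneC b(1) by blast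
    also have "\<dots> = (\<Sum>c\<in>C. if c = b then \<chi> b else 0)"
    proof (rule sum.cong[OF refl])
      fix c assume "c \<in> C"
      then have "c \<in> L" using CL by blast
      then have "N one b c = (if b = c then 1 else 0)" using N_one bL by blast
      then show "of_nat (N one b c) * \<chi> c = (if c = b then \<chi> b else 0)" by auto
    qed
    also have "\<dots> = \<chi> b" using finC b by simp
    finally show ?thesis using b by simp
  qed
  have gm: "\<forall>a\<in>C. \<forall>b\<in>C. g x a * g x b = (\<Sum>c\<in>C. of_nat (N a b c) * g x c)" if x: "x \<in> L" for x
  proof (intro ballI)
    fix a b assume a: "a \<in> C" and b: "b \<in> C"
    have aL: "a \<in> L" and bL: "b \<in> L" using a b CL by blast+
    have v: "S a x * S b x = S one x * (\<Sum>c\<in>L. of_nat (N a b c) * S c x)"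
      by (rule verlinde[OF aL bL x])
    have c1: "cnj (S one x) = S one x" by (rule cnj_S_one[OF x])
    have "cnj (S a x) * cnj (S b x) = cnj (S a x * S b x)" by simp
    also have "\<dots> = cnj (S one x) * cnj (\<Sum>c\<in>L. of_nat (N a b c) * S c x)"
      unfolding v by (rule complex_cnj_mult)
    also have "cnj (\<Sum>c\<in>L. of_nat (N a b c) * S c x) = (\<Sum>c\<in>L. of_nat (N a b c) * cnj (S c x))"
      by (simp only: cnj_sum complex_cnj_mult complex_cnj_of_nat)
    also have "\<dots> = (\<Sum>c\<in>C. of_nat (N a b c) * cnj (S c x))"
    proof (rule sum.mono_neutral_right[OF fin CL], intro ballI)
      fix c assume "c \<in> L - C"
      then have "N a b c = 0" using clos a b by blast
      then show "of_nat (N a b c) * cnj (S c x) = 0" by simp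
    qed
    finally have e: "cnj (S a x) * cnj (S b x) = S one x * (\<Sum>c\<in>C. of_nat (N a b c) * cnj (S c x))"
      unfolding c1 .
    have nz: "S one x \<noteq> 0" using S_one_nz x by blast
    have "g x a * g x b = (cnj (S a x) * cnj (S b x)) / (S one x * S one x)"
      by (simp add: g_def)
    also have "\<dots> = (\<Sum>c\<in>C. of_nat (N a b c) * cnj (S c x)) / S one x"
      unfolding e using nz by simp
    also have "\<dots> = (\<Sum>c\<in>C. of_nat (N a b c) * g x c)"
      unfolding g_def sum_divide_distrib by (simp add: mult_ac)
    finally show "g x a * g x b = (\<Sum>c\<in>C. of_nat (N a b c) * g x c)" .
  qed
  have g1: "g x one = 1" if "x \<in> L" for x
    using that S_one_nz cnj_S_one by (simp add: g_def)
  have key: "finite X \<Longrightarrow> X \<subseteq> L \<Longrightarrow> \<exists>u. ev \<chi> u \<noteq> 0 \<and> (\<forall>x\<in>X. ev (g x) u = 0)" for X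
  proof (induction X rule: finite_induct)
    case empty
    have "ev \<chi> (\<lambda>a. if a = one then 1 else 0) = \<chi> one"
      unfolding ev_def by (rule delta_sum1[OF finC oneC])
    then show ?case using chi1 by (intro exI[of _ "\<lambda>a. if a = one then 1 else 0"]) simp
  next
    case (insert x X)
    then obtain u where u: "ev \<chi> u \<noteq> 0" "\<forall>y\<in>X. ev (g y) u = 0" by auto
    have xL: "x \<in> L" using insert by auto
    obtain a where a: "a \<in> C" "\<chi> a \<noteq> g x a" using nex xL g_def by auto
    define v where "v b = (if b = a then 1 else 0) - (if b = one then g x a else 0)" for b
    have evv: "ev h v = h a - g x a * h one" for h
    proof -
      have "ev h v = (\<Sum>b\<in>C. (if b = a then 1 else 0) * h b - g x a * ((if b = one then 1 else 0) * h b))"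
        unfolding ev_def v_def by (rule sum.cong) (auto simp: algebra_simps)
      also have "\<dots> = (\<Sum>b\<in>C. (if b = a then 1 else 0) * h b) - g x a * (\<Sum>b\<in>C. (if b = one then 1 else 0) * h b)"
        by (simp add: sum_subtractf sum_distrib_left)
      also have "\<dots> = h a - g x a * h one"
        using delta_sum1[OF finC a(1)] delta_sum1[OF finC oneC] by simp
      finally show ?thesis .
    qed
    have "ev \<chi> (mult u v) = ev \<chi> u * ev \<chi> v" by (rule hom[OF chim])
    also have "\<dots> \<noteq> 0" using u a by (simp add: evv chi1)
    finally have 1: "ev \<chi> (mult u v) \<noteq> 0" .
    have 2: "\<forall>y\<in>insert x X. ev (g y) (mult u v) = 0"
    proof
      fix y assume y: "y \<in> insert x X"
      then have yL: "y \<in> L" using insert by auto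
      have "ev (g y) (mult u v) = ev (g y) u * ev (g y) v" by (rule hom[OF gm[OF yL]])
      then show "ev (g y) (mult u v) = 0" using y u by (auto simp: evv g1[OF xL])
    qed
    show ?case using 1 2 by blast
  qed
  obtain u where u: "ev \<chi> u \<noteq> 0" "\<forall>x\<in>L. ev (g x) u = 0" using key[OF fin] by blast
  have z: "(\<Sum>a\<in>C. u a * cnj (S a x)) = 0" if x: "x \<in> L" for x
  proof -
    have "ev (g x) u = (\<Sum>a\<in>C. u a * cnj (S a x)) / S one x"
      by (simp add: ev_def g_def sum_divide_distrib)
    then show ?thesis using u x S_one_nz by auto
  qed
  have uz: "u b = 0" if b: "b \<in> C" for b
  proof -
    have "u b = (\<Sum>a\<in>C. u a * (if b = a then 1 else 0))" using delta_sum2[OF finC b] by simp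
    also have "\<dots> = (\<Sum>a\<in>C. u a * (\<Sum>x\<in>L. S b x * cnj (S a x)))"
    proof (rule sum.cong[OF refl])
      fix a assume "a \<in> C"
      then have "a \<in> L" "b \<in> L" using b CL by blast+
      then show "u a * (if b = a then 1 else 0) = u a * (\<Sum>x\<in>L. S b x * cnj (S a x))"
        using unitary by simp
    qed
    also have "\<dots> = (\<Sum>a\<in>C. \<Sum>x\<in>L. S b x * (u a * cnj (S a x)))"
      by (simp add: sum_distrib_left mult_ac)
    also have "\<dots> = (\<Sum>x\<in>L. \<Sum>a\<in>C. S b x * (u a * cnj (S a x)))"
      by (rule sum.swap)
    also have "\<dots> = (\<Sum>x\<in>L. S b x * (\<Sum>a\<in>C. u a * cnj (S a x)))"
      by (simp add: sum_distrib_left)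
    also have "\<dots> = 0" using z by simp
    finally show ?thesis .
  qed
  have "ev \<chi> u = 0" by (simp add: ev_def uz)
  then show False using u by simp
qed

end

locale smc = mtc +
  fixes C :: "'a set" and \<psi> :: 'a
  assumes SM: "super_modular_sub L one dual N \<theta> S C \<psi>"
    and ME: "minimal_extension L d C"
begin

lemma CL: "C \<subseteq> L" using SM unfolding super_modular_sub_def fusion_subcat_def by (elim conjE) blast
lemma oneC: "one \<in> C" using SM unfolding super_modular_sub_def fusion_subcat_def by (elim conjE) blast
lemma dualC: "a \<in> C \<Longrightarrow> dual a \<in> C" using SM unfolding super_modular_sub_def fusion_subcat_def by (elim conjE) blast
lemma closC: "\<forall>a\<in>C. \<forall>b\<in>C. \<forall>c. N a b c \<noteq> 0 \<longrightarrow> c \<in> C"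
  using SM unfolding super_modular_sub_def fusion_subcat_def by (elim conjE) blast
lemma psiC: "\<psi> \<in> C" using SM unfolding super_modular_sub_def by (elim conjE) blast
lemma psi_ne: "\<psi> \<noteq> one" using SM unfolding super_modular_sub_def by (elim conjE) blast
lemma N_pp: "N \<psi> \<psi> c = (if c = one then 1 else 0)" using SM unfolding super_modular_sub_def by (elim conjE) blast
lemma transp: "b \<in> C \<Longrightarrow> monodromy one S \<psi> b = 1"
proof -
  assume b: "b \<in> C"
  have "\<psi> \<in> {a\<in>C. \<forall>b\<in>C. monodromy one S a b = 1}"
    using SM unfolding super_modular_sub_def by (elim conjE) blast
  then show ?thesis using b by auto
qed
lemma psiL: "\<psi> \<in> L" using psiC CL by auto
lemma finC: "finite C" using CL fin finite_subset by blast

lemma dual_psi: "dual \<psi> = \<psi>"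
  using N_unit[OF psiL psiL] N_pp by (auto split: if_splits)

lemma d_psi: "d \<psi> = 1"
proof -
  have "d \<psi> * d \<psi> = (\<Sum>c\<in>L. real (N \<psi> \<psi> c) * d c)" using d_mult psiL by simp
  also have "\<dots> = (\<Sum>c\<in>L. if c = one then d c else 0)"
    by (rule sum.cong) (auto simp: N_pp)
  also have "\<dots> = 1" using fin one_L d_one by simp
  finally have "d \<psi> * d \<psi> = 1" .
  then show ?thesis using d_pos[OF psiL]
    by (metis abs_of_pos mult_cancel_right1 power2_eq_square real_sqrt_abs real_sqrt_one)
qed

lemma S_psi: assumes b: "b \<in> C" shows "S b \<psi> = complex_of_real (d b / D)"
proof -
  have bL: "b \<in> L" using b CL by auto
  have m: "cnj (S \<psi> b) * S one one / (S one \<psi> * S one b) = 1"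
    using transp[OF b] by (simp add: monodromy_def)
  have "cnj (S \<psi> b) = complex_of_real (d b / D)"
    using m D_pos d_pos[OF bL]
    by (simp add: S_one_left bL psiL one_L d_one d_psi field_simps split: if_splits)
  then have "S \<psi> b = complex_of_real (d b / D)"
    by (metis complex_cnj_cnj complex_cnj_complex_of_real)
  then show ?thesis using S_sym bL psiL by simp
qed

definition "K = {z\<in>L. \<forall>b\<in>C. S b z = complex_of_real (d b) * S one z}"
definition "DC2 = (\<Sum>a\<in>C. (d a)^2)"

lemma dsum: assumes c: "c \<in> L" and b: "b \<in> C"
  shows "(\<Sum>a\<in>C. d a * real (N a b c)) = (if c \<in> C then d b * d c else 0)"
proof (cases "c \<in> C")
  case False
  then have "\<forall>a\<in>C. N a b c = 0" using closC b by blast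
  then show ?thesis using False by simp
next
  case True
  have bL: "b \<in> L" using b CL by auto
  have "(\<Sum>a\<in>C. d a * real (N a b c)) = (\<Sum>a\<in>C. real (N c (dual b) a) * d a)"
  proof (rule sum.cong[OF refl])
    fix a assume a: "a \<in> C"
    then have aL: "a \<in> L" using CL by auto
    have "N a b c = N b a c" by (rule N_comm)
    also have "\<dots> = N (dual b) c a" by (rule N_R[OF bL aL c])
    also have "\<dots> = N c (dual b) a" by (rule N_comm)
    finally show "d a * real (N a b c) = real (N c (dual b) a) * d a" by simp
  qed
  also have "\<dots> = (\<Sum>a\<in>L. real (N c (dual b) a) * d a)"
  proof (rule sum.mono_neutral_left[OF fin CL], intro ballI)
    fix a assume "a \<in> L - C"
    then have "N c (dual b) a = 0" using closC True dualC[OF b] by blast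
    then show "real (N c (dual b) a) * d a = 0" by simp
  qed
  also have "\<dots> = d c * d (dual b)" using d_mult c dual_L bL by simp
  finally show ?thesis using True d_dual bL by simp
qed

lemma E_val: assumes z: "z \<in> L"
  shows "(\<Sum>a\<in>C. complex_of_real (d a) * S a z) = (if z \<in> K then complex_of_real DC2 * S one z else 0)"
proof -
  define E where "E = (\<Sum>a\<in>C. complex_of_real (d a) * S a z)"
  have eig: "E * S b z = S one z * complex_of_real (d b) * E" if b: "b \<in> C" for b
  proof -
    have bL: "b \<in> L" using b CL by blast
    have "E * S b z = (\<Sum>a\<in>C. complex_of_real (d a) * S a z * S b z)"
      unfolding E_def by (rule sum_distrib_right)
    also have "\<dots> = (\<Sum>a\<in>C. \<Sum>c\<in>L. S one z * (complex_of_real (d a * real (N a b c)) * S c z))"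
    proof (rule sum.cong[OF refl])
      fix a assume "a \<in> C"
      then have aL: "a \<in> L" using CL by blast
      have "complex_of_real (d a) * S a z * S b z = complex_of_real (d a) * (S a z * S b z)"
        by (simp only: mult.assoc)
      also have "\<dots> = complex_of_real (d a) * (S one z * (\<Sum>c\<in>L. of_nat (N a b c) * S c z))"
        by (simp only: verlinde[OF aL bL z])
      also have "\<dots> = (\<Sum>c\<in>L. S one z * (complex_of_real (d a * real (N a b c)) * S c z))"
        by (simp add: sum_distrib_left mult_ac)
      finally show "complex_of_real (d a) * S a z * S b z = (\<Sum>c\<in>L. S one z * (complex_of_real (d a * real (N a b c)) * S c z))" .
    qed
    also have "\<dots> = (\<Sum>c\<in>L. \<Sum>a\<in>C. S one z * (complex_of_real (d a * real (N a b c)) * S c z))"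
      by (rule sum.swap)
    also have "\<dots> = (\<Sum>c\<in>L. S one z * (complex_of_real (\<Sum>a\<in>C. d a * real (N a b c)) * S c z))"
      by (simp add: sum_distrib_left sum_distrib_right)
    also have "\<dots> = (\<Sum>c\<in>L. if c \<in> C then S one z * (complex_of_real (d b) * (complex_of_real (d c) * S c z)) else 0)"
      by (rule sum.cong[OF refl]) (simp add: dsum b)
    also have "\<dots> = (\<Sum>c\<in>C. S one z * (complex_of_real (d b) * (complex_of_real (d c) * S c z)))"
      using fin CL by (simp add: sum.If_cases Int_absorb1)
    also have "\<dots> = S one z * complex_of_real (d b) * E"
      by (simp add: E_def sum_distrib_left mult.assoc)
    finally show ?thesis .
  qed
  show ?thesis
  proof (cases "z \<in> K")
    case True
    then have "E = (\<Sum>a\<in>C. complex_of_real (d a) * (complex_of_real (d a) * S one z))"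
      unfolding E_def K_def by (intro sum.cong) auto
    also have "\<dots> = complex_of_real DC2 * S one z"
    proof -
      have "complex_of_real DC2 * S one z = (\<Sum>a\<in>C. complex_of_real ((d a)^2) * S one z)"
        unfolding DC2_def of_real_sum by (rule sum_distrib_right)
      also have "\<dots> = (\<Sum>a\<in>C. complex_of_real (d a) * (complex_of_real (d a) * S one z))"
        by (rule sum.cong[OF refl]) (simp add: power2_eq_square)
      finally show ?thesis by simp
    qed
    finally show ?thesis using True by (simp add: E_def)
  next
    case False
    have "E = 0"
    proof (rule ccontr)
      assume "E \<noteq> 0"
      then have "\<forall>b\<in>C. S b z = complex_of_real (d b) * S one z"
        using eig by (metis mult.commute mult_right_cancel)
      then show False using False z by (simp add: K_def)
    qed
    then show ?thesis using False by (simp add: E_def)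
  qed
qed

lemma DC2_pos: "DC2 > 0"
  unfolding DC2_def using finC oneC CL d_pos by (intro sum_pos) (auto, metis less_irrefl subsetD)

lemma K_sum: "(\<Sum>z\<in>K. (d z)^2) = 2"
proof -
  have KL: "K \<subseteq> L" by (auto simp: K_def)
  have "(1::complex) = (\<Sum>a\<in>C. complex_of_real (d a) * (if a = one then 1 else 0))"
    using finC oneC d_one by (simp add: if_distrib cong: if_cong)
  also have "\<dots> = (\<Sum>a\<in>C. complex_of_real (d a) * (\<Sum>z\<in>L. S a z * cnj (S one z)))"
    by (rule sum.cong[OF refl]) (use CL unitary one_L in auto)
  also have "\<dots> = (\<Sum>z\<in>L. cnj (S one z) * (\<Sum>a\<in>C. complex_of_real (d a) * S a z))"
    by (simp add: sum_distrib_left sum_distrib_right mult_ac sum.swap[of _ C])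
  also have "\<dots> = (\<Sum>z\<in>L. if z \<in> K then complex_of_real (DC2 / D^2 * (d z)^2) else 0)"
    by (rule sum.cong[OF refl]) (auto simp: E_val cnj_S_one S_one_left power2_eq_square)
  also have "\<dots> = complex_of_real (DC2 / D^2 * (\<Sum>z\<in>K. (d z)^2))"
    using fin KL by (simp add: sum.If_cases Int_absorb1 sum_distrib_left)
  finally have "DC2 / D^2 * (\<Sum>z\<in>K. (d z)^2) = 1"
    by (metis of_real_eq_1_iff)
  moreover have "D^2 = 2 * DC2" using ME by (simp add: D_sq minimal_extension_def DC2_def)
  ultimately show ?thesis using DC2_pos by (simp add: field_simps)
qed

lemma one_K: "one \<in> K"
  using CL by (auto simp: K_def one_L S_one_right S_one_left d_one)

lemma psi_K: "\<psi> \<in> K"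
  using CL by (auto simp: K_def psiL S_psi S_one_left d_psi)

lemma K_eq: "K = {one, \<psi>}"
proof -
  have KL: "K \<subseteq> L" by (auto simp: K_def)
  have finK: "finite K" using KL fin finite_subset by blast
  have "(\<Sum>z\<in>K. (d z)^2) = (\<Sum>z\<in>{one,\<psi>}. (d z)^2) + (\<Sum>z\<in>K - {one,\<psi>}. (d z)^2)"
    using finK one_K psi_K by (metis Diff_partition empty_subsetI insert_subset sum.subset_diff add.commute)
  also have "(\<Sum>z\<in>{one,\<psi>}. (d z)^2) = 2" using psi_ne d_one d_psi by simp
  finally have "(\<Sum>z\<in>K - {one,\<psi>}. (d z)^2) = 0" using K_sum by simp
  then have "\<forall>z\<in>K - {one,\<psi>}. (d z)^2 = 0"
    using finK by (subst (asm) sum_nonneg_eq_0_iff) auto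
  then have "K - {one,\<psi>} = {}" using KL d_pos by force
  then show ?thesis using one_K psi_K by blast
qed

end

context smc begin

lemma N_psi_sym: "z \<in> L \<Longrightarrow> e \<in> L \<Longrightarrow> N \<psi> e z = N \<psi> z e"
  using N_R[OF psiL, of e z] dual_psi by simp

lemma N_psi_uniq: assumes z: "z \<in> L" and e: "N \<psi> z e \<noteq> 0"
  shows "N \<psi> z c = (if c = e then 1 else 0)"
proof -
  have eL: "e \<in> L" using N_L e by blast
  have "(\<Sum>c\<in>L. N \<psi> \<psi> c * N c z z) = (\<Sum>c\<in>L. N \<psi> z c * N \<psi> c z)"
    using N_assoc psiL z by simp
  moreover have "(\<Sum>c\<in>L. N \<psi> \<psi> c * N c z z) = 1"
  proof -
    have "(\<Sum>c\<in>L. N \<psi> \<psi> c * N c z z) = (\<Sum>c\<in>L. if c = one then 1 else 0)"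
      by (rule sum.cong[OF refl]) (auto simp: N_pp N_one z)
    then show ?thesis using fin one_L by simp
  qed
  moreover have "(\<Sum>c\<in>L. N \<psi> z c * N \<psi> c z) = (\<Sum>c\<in>L. (N \<psi> z c)^2)"
    by (rule sum.cong[OF refl]) (simp add: N_psi_sym z power2_eq_square)
  ultimately have s: "(\<Sum>c\<in>L. (N \<psi> z c)^2) = 1" by simp
  have "(\<Sum>c\<in>L. (N \<psi> z c)^2) = (N \<psi> z e)^2 + (\<Sum>c\<in>L - {e}. (N \<psi> z c)^2)"
    using fin eL by (simp add: sum.remove)
  then have s2: "(N \<psi> z e)^2 + (\<Sum>c\<in>L - {e}. (N \<psi> z c)^2) = 1" using s by simp
  then have "(N \<psi> z e)^2 \<le> 1" by linarith
  then have e1: "N \<psi> z e = 1" using e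
    by (metis One_nat_def less_one linorder_neqE_nat not_less power2_nat_le_eq_le power_one)
  then have "(\<Sum>c\<in>L - {e}. (N \<psi> z c)^2) = 0" using s2 by simp
  then have "\<forall>c\<in>L - {e}. N \<psi> z c = 0" using fin by simp
  then show ?thesis using e1 N_L by (cases "c = e") auto
qed

lemma d_psi_mult: assumes x: "x \<in> L" and y: "N \<psi> x y \<noteq> 0" shows "d y = d x"
proof -
  have yL: "y \<in> L" using N_L y by blast
  have "d \<psi> * d x = (\<Sum>c\<in>L. real (N \<psi> x c) * d c)" using d_mult psiL x by simp
  also have "\<dots> = (\<Sum>c\<in>L. if c = y then d c else 0)"
    by (rule sum.cong[OF refl]) (simp add: N_psi_uniq[OF x y])
  also have "\<dots> = d y" using fin yL by simp
  finally show ?thesis using d_psi by simp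
qed

lemma conj_char: assumes x: "x \<in> L"
  shows "\<exists>xb\<in>L. \<forall>a\<in>L. S a xb = cnj (S a x) * S one xb / S one x"
proof -
  have fc: "fusion_character L N (\<lambda>a. S a x / S one x)"
    unfolding fusion_character_def
  proof
    show "\<exists>a\<in>L. S a x / S one x \<noteq> 0" using one_L S_one_nz x by auto
    show "\<forall>a\<in>L. \<forall>b\<in>L. S a x / S one x * (S b x / S one x) = (\<Sum>c\<in>L. of_nat (N a b c) * (S c x / S one x))"
    proof (intro ballI)
      fix a b assume a: "a \<in> L" and b: "b \<in> L"
      have nz: "S one x \<noteq> 0" using S_one_nz x by blast
      have "S a x / S one x * (S b x / S one x) = (S a x * S b x) / (S one x * S one x)" by simp
      also have "\<dots> = (\<Sum>c\<in>L. of_nat (N a b c) * S c x) / S one x"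
        using verlinde[OF a b x] nz by simp
      finally show "S a x / S one x * (S b x / S one x) = (\<Sum>c\<in>L. of_nat (N a b c) * (S c x / S one x))"
        by (simp add: sum_divide_distrib)
    qed
  qed
  obtain xb where xb: "xb \<in> L" "\<forall>a\<in>L. S a x / S one x = cnj (S a xb) / S one xb"
    using surj[OF subset_refl one_L _ fc] N_L by blast
  have "S a xb = cnj (S a x) * S one xb / S one x" if a: "a \<in> L" for a
  proof -
    have "cnj (S a xb) = S a x * S one xb / S one x"
      using xb(2) a S_one_nz[OF xb(1)] by (simp add: field_simps)
    then have "S a xb = cnj (S a x * S one xb / S one x)"
      by (metis complex_cnj_cnj)
    then show ?thesis using cnj_S_one x xb(1) by simp
  qed
  then show ?thesis using xb(1) by blast
qed

lemma key_nz:
  assumes x: "x \<in> L" and xb: "xb \<in> L" and hxb: "\<forall>a\<in>L. S a xb = cnj (S a x) * S one xb / S one x"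
    and y: "y \<in> L" and r: "r \<noteq> 0" and hy: "\<forall>a\<in>C. S a y = r * S a x"
  shows "N xb y one \<noteq> 0 \<or> N xb y \<psi> \<noteq> 0"
proof (rule ccontr)
  assume "\<not> ?thesis"
  then have n0: "N xb y one = 0" "N xb y \<psi> = 0" by auto
  define T where "T = (\<Sum>a\<in>C. complex_of_real D * (S xb a * S y a))"
  have "T = (\<Sum>a\<in>C. complex_of_real D * (S one a * (\<Sum>c\<in>L. of_nat (N xb y c) * S c a)))"
    unfolding T_def by (rule sum.cong[OF refl]) (use verlinde xb y CL in auto)
  also have "\<dots> = (\<Sum>a\<in>C. complex_of_real (d a) * (\<Sum>c\<in>L. of_nat (N xb y c) * S a c))"
  proof (rule sum.cong[OF refl])
    fix a assume "a \<in> C"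
    then have aL: "a \<in> L" using CL by auto
    have "complex_of_real D * S one a = complex_of_real (d a)"
      using D_pos by (simp add: S_one_left aL)
    moreover have "(\<Sum>c\<in>L. of_nat (N xb y c) * S c a) = (\<Sum>c\<in>L. of_nat (N xb y c) * S a c)"
      by (rule sum.cong[OF refl]) (simp add: S_sym aL)
    ultimately show "complex_of_real D * (S one a * (\<Sum>c\<in>L. of_nat (N xb y c) * S c a)) =
        complex_of_real (d a) * (\<Sum>c\<in>L. of_nat (N xb y c) * S a c)"
      by (metis mult.assoc)
  qed
  also have "\<dots> = (\<Sum>c\<in>L. of_nat (N xb y c) * (\<Sum>a\<in>C. complex_of_real (d a) * S a c))"
    by (simp add: sum_distrib_left sum_distrib_right mult_ac sum.swap[of _ C])
  also have "\<dots> = (\<Sum>c\<in>L. of_nat (N xb y c) * (if c \<in> K then complex_of_real DC2 * S one c else 0))"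
    by (rule sum.cong[OF refl]) (simp add: E_val)
  also have "\<dots> = 0"
    by (rule sum.neutral) (auto simp: K_eq n0)
  finally have T0: "T = 0" .
  have "T = (\<Sum>a\<in>C. complex_of_real D * (S one xb / S one x * r) * (cnj (S a x) * S a x))"
  proof (unfold T_def, rule sum.cong[OF refl])
    fix a assume "a \<in> C"
    then have aL: "a \<in> L" and aC: "a \<in> C" using CL by auto
    show "complex_of_real D * (S xb a * S y a) = complex_of_real D * (S one xb / S one x * r) * (cnj (S a x) * S a x)"
    proof -
      have 1: "S xb a = cnj (S a x) * S one xb / S one x" using hxb aL S_sym[OF aL xb] by simp
      have 2: "S y a = r * S a x" using hy aC S_sym[OF aL y] by simp
      show ?thesis unfolding 1 2 by (simp add: field_simps)
    qed
  qed
  also have "\<dots> = complex_of_real D * (S one xb / S one x * r) * (\<Sum>a\<in>C. cnj (S a x) * S a x)"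
    by (simp add: sum_distrib_left)
  finally have T1: "T = complex_of_real D * (S one xb / S one x * r) * (\<Sum>a\<in>C. cnj (S a x) * S a x)" .
  have pos: "(\<Sum>a\<in>C. (cmod (S a x))^2) > 0"
  proof -
    have "(cmod (S one x))^2 \<le> (\<Sum>a\<in>C. (cmod (S a x))^2)"
      using finC oneC by (intro member_le_sum) auto
    moreover have "(cmod (S one x))^2 > 0" using S_one_nz x by simp
    ultimately show ?thesis by linarith
  qed
  have "(\<Sum>a\<in>C. cnj (S a x) * S a x) = complex_of_real (\<Sum>a\<in>C. (cmod (S a x))^2)"
    unfolding of_real_sum by (rule sum.cong[OF refl]) (simp only: complex_norm_square mult.commute)
  then have "(\<Sum>a\<in>C. cnj (S a x) * S a x) \<noteq> 0" using pos
    by (metis less_irrefl of_real_eq_0_iff)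
  moreover have "S one xb \<noteq> 0" "S one x \<noteq> 0" using S_one_nz x xb by auto
  moreover have "complex_of_real D \<noteq> 0" using D_pos by simp
  ultimately have "T \<noteq> 0" using T1 r by simp
  then show False using T0 by simp
qed

lemma rel: assumes x: "x \<in> L" and y: "y \<in> L"
  shows "(\<forall>a\<in>C. cnj (S a y) / S one y = cnj (S a x) / S one x) \<longleftrightarrow> (y = x \<or> N \<psi> x y \<noteq> 0)"
proof
  assume h: "\<forall>a\<in>C. cnj (S a y) / S one y = cnj (S a x) / S one x"
  obtain xb where xb: "xb \<in> L" "\<forall>a\<in>L. S a xb = cnj (S a x) * S one xb / S one x"
    using conj_char[OF x] by blast
  have hy: "\<forall>a\<in>C. S a y = (S one y / S one x) * S a x"
  proof
    fix a assume a: "a \<in> C"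
    have "cnj (S a y) = cnj (S a x) * S one y / S one x"
      using h a S_one_nz[OF y] S_one_nz[OF x] by (simp add: field_simps)
    then have "S a y = cnj (cnj (S a x) * S one y / S one x)" by (metis complex_cnj_cnj)
    then show "S a y = (S one y / S one x) * S a x" using cnj_S_one x y by simp
  qed
  have r: "S one y / S one x \<noteq> 0" using S_one_nz x y by simp
  have Ny: "N xb y one \<noteq> 0 \<or> N xb y \<psi> \<noteq> 0" by (rule key_nz[OF x xb(1) xb(2) y r hy])
  have Nx: "N xb x one \<noteq> 0 \<or> N xb x \<psi> \<noteq> 0" by (rule key_nz[OF x xb(1) xb(2) x one_neq_zero]) simp
  define w where "w = dual xb"
  have wL: "w \<in> L" using dual_L xb w_def by simp
  have tr: "z = w \<or> N \<psi> w z \<noteq> 0" if "z \<in> L" "N xb z one \<noteq> 0 \<or> N xb z \<psi> \<noteq> 0" for z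
  proof -
    have "N xb z one = (if z = w then 1 else 0)" using N_unit xb(1) that(1) w_def by simp
    moreover have "N xb z \<psi> = N \<psi> w z"
      using N_R[OF xb(1) that(1) psiL] N_comm[of w \<psi> z] w_def by simp
    ultimately show ?thesis using that(2) by (auto split: if_splits)
  qed
  have cy: "y = w \<or> N \<psi> w y \<noteq> 0" using tr y Ny by blast
  have cx: "x = w \<or> N \<psi> w x \<noteq> 0" using tr x Nx by blast
  show "y = x \<or> N \<psi> x y \<noteq> 0"
  proof -
    { assume "y = w" "N \<psi> w x \<noteq> 0"
      then have ?thesis using N_psi_sym wL x by simp }
    moreover
    { assume "N \<psi> w y \<noteq> 0" "N \<psi> w x \<noteq> 0"
      then have "y = x" using N_psi_uniq[OF wL, of y x] by (auto split: if_splits) }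
    ultimately show ?thesis using cx cy by auto
  qed
next
  assume h: "y = x \<or> N \<psi> x y \<noteq> 0"
  show "\<forall>a\<in>C. cnj (S a y) / S one y = cnj (S a x) / S one x"
  proof (cases "y = x")
    case True then show ?thesis by simp
  next
    case False
    then have nz: "N \<psi> x y \<noteq> 0" using h by simp
    have s1: "S one y = S one x" using d_psi_mult[OF x nz] S_one_left x y by simp
    have "S a y = S a x" if a: "a \<in> C" for a
    proof -
      have aL: "a \<in> L" using a CL by auto
      have "S x a * S \<psi> a = S one a * (\<Sum>c\<in>L. of_nat (N x \<psi> c) * S c a)"
        using verlinde x psiL aL by simp
      also have "(\<Sum>c\<in>L. of_nat (N x \<psi> c) * S c a) = (\<Sum>c\<in>L. if c = y then S c a else 0)"
        by (rule sum.cong[OF refl]) (simp add: N_comm[of x \<psi>] N_psi_uniq[OF x nz])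
      also have "\<dots> = S y a" using fin y by simp
      finally have e: "S x a * S \<psi> a = S one a * S y a" .
      have "S \<psi> a = S one a" using S_psi[OF a] S_sym[OF aL psiL] S_one_left aL by simp
      then have "S x a = S y a" using e S_one_nz[OF aL] by (simp add: mult.commute)
      then show ?thesis using S_sym aL x y by simp
    qed
    then show ?thesis using s1 by simp
  qed
qed

lemma mono_eq: assumes a: "a \<in> L" and x: "x \<in> L"
  shows "complex_of_real (d a) * monodromy one S a x = cnj (S a x) / S one x"
  using D_pos d_pos[OF a] S_one_nz[OF x]
  by (simp add: monodromy_def S_one_left a one_L d_one field_simps)

end

theorem mainTheorem1:
  fixes L C :: "'a set" and one \<psi> :: 'a and dual :: "'a \<Rightarrow> 'a"
    and N :: "'a \<Rightarrow> 'a \<Rightarrow> 'a \<Rightarrow> nat" and d :: "'a \<Rightarrow> real"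
    and \<theta> :: "'a \<Rightarrow> complex" and S :: "'a \<Rightarrow> 'a \<Rightarrow> complex"
    and \<chi> :: "'a \<Rightarrow> complex"
  assumes "umtc L one dual N d \<theta> S"
    and "super_modular_sub L one dual N \<theta> S C \<psi>"
    and "minimal_extension L d C"
    and "fusion_character C N \<chi>"
  shows "\<exists>x\<in>L. (\<forall>a\<in>C. \<chi> a = complex_of_real (d a) * monodromy one S a x) \<and>
           (\<forall>y\<in>L. (\<forall>a\<in>C. \<chi> a = complex_of_real (d a) * monodromy one S a y)
                    \<longleftrightarrow> (y = x \<or> N \<psi> x y \<noteq> 0))"
proof -
  have eq: "mtc L one dual N d \<theta> S \<longleftrightarrow> umtc L one dual N d \<theta> S"
    unfolding mtc_def umtc_def by (simp only: conj_assoc)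
  have m: "mtc L one dual N d \<theta> S"
    unfolding eq by (rule assms(1))
  interpret smc L one dual N d \<theta> S C \<psi>
  proof (rule smc.intro[OF m])
    show "smc_axioms L one dual N d \<theta> S C \<psi>"
      unfolding smc_axioms_def using assms(2,3) by (rule conjI)
  qed
  obtain x where x: "x \<in> L" "\<forall>a\<in>C. \<chi> a = cnj (S a x) / S one x"
    using surj[OF CL oneC closC assms(4)] by blast
  have m: "\<And>a z. a \<in> C \<Longrightarrow> z \<in> L \<Longrightarrow> complex_of_real (d a) * monodromy one S a z = cnj (S a z) / S one z"
    using mono_eq CL by blast
  show ?thesis
  proof (intro bexI[OF _ x(1)] conjI ballI)
    show "\<And>a. a \<in> C \<Longrightarrow> \<chi> a = complex_of_real (d a) * monodromy one S a x"
      using x m by simp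
  next
    fix y assume y: "y \<in> L"
    have "(\<forall>a\<in>C. \<chi> a = complex_of_real (d a) * monodromy one S a y) \<longleftrightarrow>
          (\<forall>a\<in>C. cnj (S a y) / S one y = cnj (S a x) / S one x)"
      using x m y by auto
    also have "\<dots> \<longleftrightarrow> (y = x \<or> N \<psi> x y \<noteq> 0)" by (rule rel[OF x(1) y])
    finally show "(\<forall>a\<in>C. \<chi> a = complex_of_real (d a) * monodromy one S a y) \<longleftrightarrow> (y = x \<or> N \<psi> x y \<noteq> 0)" .
  qed
qed

end
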